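(* Fix the rates $P_i>0$, $i\in\mathcal S$, let $\hat P=\sum_{i\in\mathcal S}P_i$, and let $(E_i(0),\,i\in\mathcal S)$ be any initial energy configuration with total energy $E=\sum_iE_i(0)$. Let $(\tilde E_i(0),\,i\in\mathcal S)$ be the balanced configuration with the same total energy, $\tilde E_i(0)=E\,P_i/\hat P$ (assumed to satisfy $\tilde E_i(0)\le\overline E_i$). If a nonnegative demand function $(d(t),\,t\ge0)$ can be completely served on $[0,T]$ by some discharge-only policy starting from $(E_i(0))$, then it can be completely served on $[0,T]$ by some discharge-only policy starting from $(\tilde E_i(0))$.
   Context: A finite set $\mathcal S$ of energy stores is given. Store $i\in\mathcal S$ has capacity $\overline E_i>0$ and maximum discharge rate $P_i>0$. A (discharge-only) policy is a choice of measurable rate functions $(r_i(t),\,t\ge0)$, $i\in\mathcal S$, with stored energies $E_i(t)=E_i(0)-\int_0^t r_i(u)\,du$, subject to $0\le E_i(t)\le\overline E_i$, $0\le r_i(t)\le P_i$ and $\sum_{i\in\mathcal S}r_i(t)\le d(t)$ for all $t\ge0$, where $(d(t),\,t\ge0)$ is a nonnegative demand function. The demand is completely served on $[0,T]$ if $\sum_i r_i(t)=d(t)$ for almost every $t\in[0,T]$. A configuration is called balanced if $E_i/P_i$ is the same for all $i\in\mathcal S$. *)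

theory Defs
  imports "HOL-Analysis.Analysis"
begin

definition stored_energy :: "('a \<Rightarrow> real) \<Rightarrow> ('a \<Rightarrow> real \<Rightarrow> real) \<Rightarrow> 'a \<Rightarrow> real \<Rightarrow> real" where
  "stored_energy E0 r i t = E0 i - set_lebesgue_integral lborel {0..t} (r i)"

definition discharge_policy ::
  "'a set \<Rightarrow> ('a \<Rightarrow> real) \<Rightarrow> ('a \<Rightarrow> real) \<Rightarrow> (real \<Rightarrow> real) \<Rightarrow> ('a \<Rightarrow> real)
    \<Rightarrow> ('a \<Rightarrow> real \<Rightarrow> real) \<Rightarrow> bool" where
  "discharge_policy S Ebar P d E0 r \<longleftrightarrow>
     (\<forall>i\<in>S. r i \<in> borel_measurable lborel) \<and>
     (\<forall>t\<ge>0. (\<forall>i\<in>S. 0 \<le> stored_energy E0 r i t \<and> stored_energy E0 r i t \<le> Ebar i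
                      \<and> 0 \<le> r i t \<and> r i t \<le> P i)
             \<and> (\<Sum>i\<in>S. r i t) \<le> d t)"

definition completely_served :: "'a set \<Rightarrow> (real \<Rightarrow> real) \<Rightarrow> real \<Rightarrow> ('a \<Rightarrow> real \<Rightarrow> real) \<Rightarrow> bool" where
  "completely_served S d T r \<longleftrightarrow>
     (AE t in lborel. t \<in> {0..T} \<longrightarrow> (\<Sum>i\<in>S. r i t) = d t)"

end

theory Submission
  imports Defs
begin

lemma int_ok:
  fixes f :: "real \<Rightarrow> real"
  assumes "f \<in> borel_measurable lborel" "\<And>x. x \<in> {0..t} \<Longrightarrow> 0 \<le> f x \<and> f x \<le> B"
  shows "set_integrable lborel {0..t} f"
  unfolding set_integrable_def
  apply (rule integrableI_bounded_set[where A="{0..t}" and B=B])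
  using assms by (auto simp: indicator_def emeasure_lborel_Icc_eq)

theorem mainTheorem3:
  fixes S :: "'a set" and Ebar P E0 :: "'a \<Rightarrow> real" and d :: "real \<Rightarrow> real" and T :: real
  assumes "finite S"
    and "\<forall>i\<in>S. Ebar i > 0"
    and "\<forall>i\<in>S. P i > 0"
    and "\<forall>t\<ge>0. d t \<ge> 0"
    and "\<forall>i\<in>S. (\<Sum>j\<in>S. E0 j) * P i / (\<Sum>j\<in>S. P j) \<le> Ebar i"
    and "\<exists>r. discharge_policy S Ebar P d E0 r \<and> completely_served S d T r"
  shows "\<exists>r. discharge_policy S Ebar P d (\<lambda>i. (\<Sum>j\<in>S. E0 j) * P i / (\<Sum>j\<in>S. P j)) r
             \<and> completely_served S d T r"
proof -
  obtain r where pol: "discharge_policy S Ebar P d E0 r" and cs: "completely_served S d T r"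
    using assms(6) by blast
  define PH where "PH = (\<Sum>j\<in>S. P j)"
  define R where "R = (\<lambda>t. \<Sum>j\<in>S. r j t)"
  define r' where "r' = (\<lambda>i t. P i / PH * R t)"
  have meas: "\<forall>i\<in>S. r i \<in> borel_measurable lborel"
   and cond: "\<And>t. t \<ge> 0 \<Longrightarrow> (\<forall>i\<in>S. 0 \<le> stored_energy E0 r i t \<and> stored_energy E0 r i t \<le> Ebar i
                      \<and> 0 \<le> r i t \<and> r i t \<le> P i) \<and> (\<Sum>i\<in>S. r i t) \<le> d t"
    using pol unfolding discharge_policy_def by auto
  have PHpos: "S \<noteq> {} \<Longrightarrow> PH > 0" unfolding PH_def
    using assms(1,3) by (simp add: sum_pos)
  have PH0: "PH \<ge> 0" unfolding PH_def using assms(3) by (simp add: sum_nonneg less_imp_le)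
  have sumr': "(\<Sum>i\<in>S. r' i t) = R t" for t
  proof (cases "S = {}")
    case True thus ?thesis by (simp add: R_def)
  next
    case False
    have "(\<Sum>i\<in>S. r' i t) = (\<Sum>i\<in>S. P i) / PH * R t"
      unfolding r'_def by (simp add: sum_distrib_right sum_divide_distrib)
    thus ?thesis using PHpos[OF False] by (simp add: PH_def)
  qed
  have Rmeas: "R \<in> borel_measurable lborel" unfolding R_def using meas by (intro borel_measurable_sum) auto
  have seti: "set_integrable lborel {0..t} (r j)" if "t \<ge> 0" "j \<in> S" for t j
    apply (rule int_ok[where B="P j"]) using meas that cond by auto
  have intR: "set_lebesgue_integral lborel {0..t} R = (\<Sum>j\<in>S. set_lebesgue_integral lborel {0..t} (r j))"
    if "t \<ge> 0" for t
    unfolding R_def set_lebesgue_integral_def scaleR_sum_right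
    apply (rule Bochner_Integration.integral_sum[where f="\<lambda>j x. indicator {0..t} x *\<^sub>R r j x"]) using seti[OF that] unfolding set_integrable_def by auto
  have intnn: "set_lebesgue_integral lborel {0..t} (r j) \<ge> 0" if "t \<ge> 0" "j \<in> S" for t j
  proof -
    have "set_integrable lborel {0..t} (\<lambda>_. 0::real)" by (simp add: set_integrable_def)
    moreover have "\<And>x. x \<in> {0..t} \<Longrightarrow> 0 \<le> r j x" using cond that by auto
    ultimately show ?thesis using set_integral_mono[OF _ seti[OF that], of "\<lambda>_. 0"] by auto
  qed
  have st': "stored_energy (\<lambda>i. (\<Sum>j\<in>S. E0 j) * P i / PH) r' i t
      = P i / PH * (\<Sum>j\<in>S. stored_energy E0 r j t)" if "t \<ge> 0" for i t
    unfolding stored_energy_def r'_def using intR[OF that]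
    by (simp add: sum_subtractf algebra_simps)
  show ?thesis unfolding PH_def[symmetric]
  proof (intro exI conjI)
    show "discharge_policy S Ebar P d (\<lambda>i. (\<Sum>j\<in>S. E0 j) * P i / PH) r'"
      unfolding discharge_policy_def
    proof (intro conjI allI impI ballI)
      fix i assume "i \<in> S" show "r' i \<in> borel_measurable lborel" unfolding r'_def using Rmeas by auto
    next
      fix t :: real assume t: "t \<ge> 0"
      show "(\<Sum>i\<in>S. r' i t) \<le> d t" using sumr' cond[OF t] R_def by simp
      fix i assume i: "i \<in> S"
      have Pi: "P i > 0" using assms(3) i by auto
      have c: "P i / PH \<ge> 0" using Pi PH0 by simp
      have sn: "(\<Sum>j\<in>S. stored_energy E0 r j t) \<ge> 0" using cond[OF t] by (simp add: sum_nonneg)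
      show "0 \<le> stored_energy (\<lambda>i. (\<Sum>j\<in>S. E0 j) * P i / PH) r' i t"
        unfolding st'[OF t] using c sn by (rule mult_nonneg_nonneg)
      have "(\<Sum>j\<in>S. stored_energy E0 r j t) \<le> (\<Sum>j\<in>S. E0 j)"
        unfolding stored_energy_def using intnn[OF t] by (intro sum_mono) auto
      hence "P i / PH * (\<Sum>j\<in>S. stored_energy E0 r j t) \<le> P i / PH * (\<Sum>j\<in>S. E0 j)"
        using c by (rule mult_left_mono)
      also have "\<dots> \<le> Ebar i" using assms(5) i by (simp add: PH_def mult.commute)
      finally show "stored_energy (\<lambda>i. (\<Sum>j\<in>S. E0 j) * P i / PH) r' i t \<le> Ebar i"
        using st'[OF t] by simp
      have R0: "R t \<ge> 0" unfolding R_def using cond[OF t] by (simp add: sum_nonneg)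
      show "0 \<le> r' i t" unfolding r'_def using c R0 by (rule mult_nonneg_nonneg)
      have "R t \<le> PH" unfolding R_def PH_def using cond[OF t] by (intro sum_mono) auto
      hence "P i / PH * R t \<le> P i / PH * PH" using c by (rule mult_left_mono)
      also have "\<dots> = P i" using PHpos i by auto
      finally show "r' i t \<le> P i" unfolding r'_def .
    qed
    show "completely_served S d T r'"
      using cs unfolding completely_served_def sumr' R_def .
  qed
qed

end
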